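(* Let $K$ be a field, $S=K[x_1,\ldots,x_n]$, and $\alpha=(k_1,\ldots,k_n)\in\mathbb N^n$. A monomial ideal $I\subset S$ is polymatroidal if and only if its expansion $I^\alpha\subset S^\alpha$ is polymatroidal.
   Context: $\mathbb N$ denotes the positive integers. For $\alpha=(k_1,\ldots,k_n)\in\mathbb N^n$ let $S^\alpha=K[x_{ij}:1\le i\le n,\ 1\le j\le k_i]$ and $P_i=(x_{i1},\ldots,x_{ik_i})\subset S^\alpha$. If $I$ is a monomial ideal with minimal monomial generating set $G(I)=\{\mathbf x^{\mathbf a_1},\ldots,\mathbf x^{\mathbf a_r}\}$, $\mathbf x^{\mathbf a}=x_1^{\mathbf a(1)}\cdots x_n^{\mathbf a(n)}$, its expansion is $I^\alpha=\sum_{l=1}^r P_1^{\mathbf a_l(1)}\cdots P_n^{\mathbf a_l(n)}\subset S^\alpha$. A monomial ideal $I$ is polymatroidal if (i) all elements of $G(I)$ have the same degree, and (ii) whenever $u=x_1^{a_1}\cdots x_n^{a_n}$ and $v=x_1^{b_1}\cdots x_n^{b_n}$ belong to $G(I)$ with $a_i>b_i$, there exists $j$ with $a_j<b_j$ such that $x_j(u/x_i)\in G(I)$. (For $I^\alpha$ the same definition is used in the polynomial ring $S^\alpha$.) *)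

theory Defs
  imports Main
begin

text \<open>Over a field K, a monomial ideal is
  determined by the set of monomials it contains, so a monomial ideal of
  K[x_v : v in V] is represented by that set of monomials: a set of monomials
  closed under multiplication by arbitrary monomials.\<close>

definition monomials :: "'v set \<Rightarrow> ('v \<Rightarrow> nat) set" where
  "monomials V = {u. \<forall>x. x \<notin> V \<longrightarrow> u x = 0}"

definition mon_divides :: "('v \<Rightarrow> nat) \<Rightarrow> ('v \<Rightarrow> nat) \<Rightarrow> bool" where
  "mon_divides u w \<longleftrightarrow> (\<forall>x. u x \<le> w x)"

definition monomial_ideal :: "'v set \<Rightarrow> ('v \<Rightarrow> nat) set \<Rightarrow> bool" where
  "monomial_ideal V I \<longleftrightarrow> I \<subseteq> monomials V \<and>
     (\<forall>u\<in>I. \<forall>w\<in>monomials V. (\<lambda>x. u x + w x) \<in> I)"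

definition gen_ideal :: "'v set \<Rightarrow> ('v \<Rightarrow> nat) set \<Rightarrow> ('v \<Rightarrow> nat) set" where
  "gen_ideal V A = {w \<in> monomials V. \<exists>a\<in>A. mon_divides a w}"

definition mingens :: "('v \<Rightarrow> nat) set \<Rightarrow> ('v \<Rightarrow> nat) set" where
  "mingens I = {u \<in> I. \<forall>w\<in>I. mon_divides w u \<longrightarrow> w = u}"

definition mdeg :: "'v set \<Rightarrow> ('v \<Rightarrow> nat) \<Rightarrow> nat" where
  "mdeg V u = (\<Sum>x\<in>V. u x)"

definition polymatroidal :: "'v set \<Rightarrow> ('v \<Rightarrow> nat) set \<Rightarrow> bool" where
  "polymatroidal V I \<longleftrightarrow>
     (\<forall>u\<in>mingens I. \<forall>w\<in>mingens I. mdeg V u = mdeg V w) \<and>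
     (\<forall>u\<in>mingens I. \<forall>w\<in>mingens I. \<forall>i\<in>V. u i > w i \<longrightarrow>
        (\<exists>j\<in>V. u j < w j \<and> (u(i := u i - 1))(j := u j + 1) \<in> mingens I))"

text \<open>Variables of S = K[x_1..x_n] and of S^alpha = K[x_ij : 1<=i<=n, 1<=j<=k_i].\<close>
definition vars :: "nat \<Rightarrow> nat set" where
  "vars n = {1..n}"

definition exp_vars :: "nat \<Rightarrow> (nat \<Rightarrow> nat) \<Rightarrow> (nat \<times> nat) set" where
  "exp_vars n k = {(i, j). 1 \<le> i \<and> i \<le> n \<and> 1 \<le> j \<and> j \<le> k i}"

text \<open>Monomial generators of P_1^(a 1) ... P_n^(a n), with P_i = (x_i1,...,x_ik_i):
  the monomials of S^alpha having degree exactly a i in the block of variables x_i*.\<close>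
definition prodP_gens :: "nat \<Rightarrow> (nat \<Rightarrow> nat) \<Rightarrow> (nat \<Rightarrow> nat) \<Rightarrow> (nat \<times> nat \<Rightarrow> nat) set" where
  "prodP_gens n k a = {m \<in> monomials (exp_vars n k).
      \<forall>i\<in>{1..n}. (\<Sum>j\<in>{1..k i}. m (i, j)) = a i}"

definition expansion :: "nat \<Rightarrow> (nat \<Rightarrow> nat) \<Rightarrow> (nat \<Rightarrow> nat) set \<Rightarrow> (nat \<times> nat \<Rightarrow> nat) set" where
  "expansion n k I = gen_ideal (exp_vars n k) (\<Union>a\<in>mingens I. prodP_gens n k a)"

end

theory Submission
  imports Defs
begin

lemma sum_eq_le:
  fixes f g :: "'a \<Rightarrow> nat"
  assumes "finite A" "\<forall>x\<in>A. f x \<le> g x" "sum f A = sum g A" "x \<in> A"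
  shows "f x = g x"
proof (rule ccontr)
  assume "f x \<noteq> g x"
  with assms have "sum f A < sum g A"
    by (intro sum_strict_mono_ex1) (auto intro: le_neq_implies_less)
  with assms(3) show False by simp
qed

lemma exp_vars_Sigma: "exp_vars n k = Sigma {1..n} (\<lambda>i. {1..k i})"
  by (auto simp: exp_vars_def)

lemma finite_exp_vars: "finite (exp_vars n k)"
  by (simp add: exp_vars_Sigma)

lemma mdeg_P:
  assumes "m \<in> prodP_gens n k a"
  shows "mdeg (exp_vars n k) m = mdeg (vars n) a"
proof -
  have "mdeg (exp_vars n k) m = (\<Sum>i\<in>{1..n}. \<Sum>j\<in>{1..k i}. m (i, j))"
    unfolding mdeg_def exp_vars_Sigma by (simp add: sum.Sigma)
  also have "\<dots> = (\<Sum>i\<in>{1..n}. a i)"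
    using assms unfolding prodP_gens_def by (intro sum.cong) auto
  finally show ?thesis by (simp add: mdeg_def vars_def)
qed

lemma P_unique:
  assumes "m \<in> prodP_gens n k c" "m \<in> prodP_gens n k c'"
    "c \<in> monomials (vars n)" "c' \<in> monomials (vars n)"
  shows "c = c'"
proof
  fix x show "c x = c' x"
  proof (cases "x \<in> {1..n}")
    case True then show ?thesis using assms(1,2) unfolding prodP_gens_def by auto
  next
    case False then show ?thesis using assms(3,4) unfolding monomials_def vars_def by auto
  qed
qed

lemma swap:
  assumes m: "m \<in> prodP_gens n k a" and p: "(i,j) \<in> exp_vars n k"
    and q: "(l,j') \<in> exp_vars n k" and pos: "m (i,j) > 0" and ne: "(i,j) \<noteq> (l,j')"
    and c: "\<forall>x. c x + (if x = i then 1 else 0) = a x + (if x = l then 1 else 0)"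
  shows "(m((i,j) := m (i,j) - 1))((l,j') := m (l,j') + 1) \<in> prodP_gens n k c"
proof -
  define m' where "m' = (m((i,j) := m (i,j) - 1))((l,j') := m (l,j') + 1)"
  have pt: "\<And>x. m' x + (if x = (i,j) then 1 else 0) = m x + (if x = (l,j') then 1 else 0)"
    using pos ne by (auto simp: m'_def)
  have mon: "m' \<in> monomials (exp_vars n k)"
    using m p q unfolding m'_def prodP_gens_def monomials_def by auto
  have ind: "(\<Sum>jj\<in>{1..k i'}. (if (i',jj) = (r,s) then 1 else 0::nat)) = (if i' = r then 1 else 0)"
    if "(r,s) \<in> exp_vars n k" for i' r s
  proof (cases "i' = r")
    case True
    then have "(\<Sum>jj\<in>{1..k i'}. (if (i',jj) = (r,s) then 1 else 0::nat)) = (\<Sum>jj\<in>{1..k i'}. (if jj = s then 1 else 0::nat))"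
      by (intro sum.cong) auto
    also have "\<dots> = 1" using that True by (simp add: exp_vars_def)
    finally show ?thesis using True by simp
  qed auto
  have "(\<Sum>jj\<in>{1..k i'}. m' (i',jj)) = c i'" if "i' \<in> {1..n}" for i'
  proof -
    have "(\<Sum>jj\<in>{1..k i'}. m' (i',jj)) + (\<Sum>jj\<in>{1..k i'}. (if (i',jj) = (i,j) then 1 else 0::nat))
        = (\<Sum>jj\<in>{1..k i'}. m (i',jj)) + (\<Sum>jj\<in>{1..k i'}. (if (i',jj) = (l,j') then 1 else 0::nat))"
      unfolding sum.distrib[symmetric] by (rule sum.cong[OF refl], rule pt)
    then have "(\<Sum>jj\<in>{1..k i'}. m' (i',jj)) + (if i' = i then 1 else 0) = a i' + (if i' = l then 1 else 0)"
      using ind[OF p] ind[OF q] m that unfolding prodP_gens_def by auto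
    with c[rule_format, of i'] show ?thesis by linarith
  qed
  with mon show ?thesis unfolding prodP_gens_def m'_def[symmetric] by auto
qed


lemma mingens_expansion:
  assumes I: "monomial_ideal (vars n) I"
  shows "mingens (expansion n k I) = (\<Union>a\<in>mingens I. prodP_gens n k a)"
proof
  let ?U = "\<Union>a\<in>mingens I. prodP_gens n k a"
  show "mingens (expansion n k I) \<subseteq> ?U"
  proof
    fix m assume "m \<in> mingens (expansion n k I)"
    then have mE: "m \<in> expansion n k I" and min: "\<forall>w\<in>expansion n k I. mon_divides w m \<longrightarrow> w = m"
      unfolding mingens_def by auto
    then obtain m' where m': "m' \<in> ?U" "mon_divides m' m"
      unfolding expansion_def gen_ideal_def by auto
    then have "m' \<in> expansion n k I"
      unfolding expansion_def gen_ideal_def prodP_gens_def mon_divides_def by auto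
    with min m' have "m' = m" by auto
    with m' show "m \<in> ?U" by simp
  qed
  show "?U \<subseteq> mingens (expansion n k I)"
  proof
    fix m assume "m \<in> ?U"
    then obtain a where a: "a \<in> mingens I" and m: "m \<in> prodP_gens n k a" by auto
    have mE: "m \<in> expansion n k I"
      using a m unfolding expansion_def gen_ideal_def prodP_gens_def mon_divides_def by auto
    have "w = m" if w: "w \<in> expansion n k I" "mon_divides w m" for w
    proof -
      obtain m' a' where a': "a' \<in> mingens I" and m': "m' \<in> prodP_gens n k a'" and d: "mon_divides m' w"
        using w(1) unfolding expansion_def gen_ideal_def by auto
      have dm: "\<forall>x. m' x \<le> m x" using d w(2) unfolding mon_divides_def by (metis le_trans)
      have a'I: "a' \<in> I" and aI: "a \<in> I" using a a' unfolding mingens_def by auto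
      have amon: "a \<in> monomials (vars n)" "a' \<in> monomials (vars n)"
        using a'I aI I unfolding monomial_ideal_def by auto
      have "mon_divides a' a" unfolding mon_divides_def
      proof
        fix x show "a' x \<le> a x"
        proof (cases "x \<in> {1..n}")
          case True
          then have "a' x = (\<Sum>j\<in>{1..k x}. m' (x,j))" "a x = (\<Sum>j\<in>{1..k x}. m (x,j))"
            using m m' unfolding prodP_gens_def by auto
          then show ?thesis using dm by (simp add: sum_mono)
        next
          case False then show ?thesis using amon unfolding monomials_def vars_def by auto
        qed
      qed
      with a a'I have "a' = a" unfolding mingens_def by auto
      have "m' = m"
      proof
        fix x show "m' x = m x"
        proof (cases "x \<in> exp_vars n k")
          case True
          then obtain i j where x: "x = (i,j)" "i \<in> {1..n}" "j \<in> {1..k i}"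
            unfolding exp_vars_def by auto
          have "(\<Sum>j\<in>{1..k i}. m' (i,j)) = (\<Sum>j\<in>{1..k i}. m (i,j))"
            using m m' x \<open>a' = a\<close> unfolding prodP_gens_def by auto
          then have "m' (i,j) = m (i,j)" using x dm by (intro sum_eq_le[where f="\<lambda>j. m' (i,j)" and g="\<lambda>j. m (i,j)"]) auto
          then show ?thesis using x by simp
        next
          case False then show ?thesis using m m' unfolding prodP_gens_def monomials_def by (metis (mono_tags, lifting) mem_Collect_eq)
        qed
      qed
      then show "w = m" using d w(2) unfolding mon_divides_def by (intro ext antisym) auto
    qed
    with mE show "m \<in> mingens (expansion n k I)" unfolding mingens_def by auto
  qed
qed


theorem theorem1p2:
  fixes n :: nat and k :: "nat \<Rightarrow> nat" and I :: "(nat \<Rightarrow> nat) set"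
  assumes "\<forall>i\<in>{1..n}. 1 \<le> k i"
    and "monomial_ideal (vars n) I"
  shows "polymatroidal (vars n) I \<longleftrightarrow> polymatroidal (exp_vars n k) (expansion n k I)"
proof -
  note ME = mingens_expansion[OF assms(2), of k]
  have Gmon: "a \<in> monomials (vars n)" if "a \<in> mingens I" for a
    using that assms(2) unfolding mingens_def monomial_ideal_def by auto
  have blk: "(\<Sum>j\<in>{1..k i}. m (i,j)) = a i" if "m \<in> prodP_gens n k a" "i \<in> {1..n}" for m a i
    using that unfolding prodP_gens_def by auto
  have Pmon: "m \<in> monomials (exp_vars n k)" if "m \<in> prodP_gens n k a" for m a
    using that unfolding prodP_gens_def by auto
  show ?thesis
  proof
    assume PI: "polymatroidal (vars n) I"
    show "polymatroidal (exp_vars n k) (expansion n k I)"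
      unfolding polymatroidal_def ME
    proof (intro conjI ballI impI)
      fix u w assume "u \<in> (\<Union>a\<in>mingens I. prodP_gens n k a)" "w \<in> (\<Union>a\<in>mingens I. prodP_gens n k a)"
      then obtain a b where "a \<in> mingens I" "u \<in> prodP_gens n k a" "b \<in> mingens I" "w \<in> prodP_gens n k b" by auto
      then show "mdeg (exp_vars n k) u = mdeg (exp_vars n k) w"
        using PI mdeg_P unfolding polymatroidal_def by metis
    next
      fix u w p assume uU: "u \<in> (\<Union>a\<in>mingens I. prodP_gens n k a)" and wU: "w \<in> (\<Union>a\<in>mingens I. prodP_gens n k a)"
        and p: "p \<in> exp_vars n k" and gt: "w p < u p"
      then obtain a b where a: "a \<in> mingens I" and u: "u \<in> prodP_gens n k a"
        and b: "b \<in> mingens I" and w: "w \<in> prodP_gens n k b" by auto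
      obtain i j where pij: "p = (i,j)" by (cases p)
      have i: "i \<in> {1..n}" and j: "j \<in> {1..k i}" using p pij unfolding exp_vars_def by auto
      show "\<exists>q\<in>exp_vars n k. u q < w q \<and>
              (u(p := u p - 1))(q := u q + 1) \<in> (\<Union>a\<in>mingens I. prodP_gens n k a)"
      proof (cases "\<exists>j'\<in>{1..k i}. u (i,j') < w (i,j')")
        case True
        then obtain j' where j': "j' \<in> {1..k i}" "u (i,j') < w (i,j')" by auto
        have q: "(i,j') \<in> exp_vars n k" using i j' unfolding exp_vars_def by auto
        have "(u((i,j) := u (i,j) - 1))((i,j') := u (i,j') + 1) \<in> prodP_gens n k a"
          using swap[OF u p[unfolded pij] q, of a] gt j' pij by fastforce
        then show ?thesis using q j' a pij by blast
      next
        case False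
        then have ge: "\<forall>j'\<in>{1..k i}. w (i,j') \<le> u (i,j')" by auto
        have "(\<Sum>j\<in>{1..k i}. w (i,j)) < (\<Sum>j\<in>{1..k i}. u (i,j))"
          using ge j gt pij by (intro sum_strict_mono_ex1) auto
        then have abi: "b i < a i" using blk[OF u i] blk[OF w i] by simp
        from PI a b i abi obtain l where l: "l \<in> vars n" "a l < b l"
          and c: "(a(i := a i - 1))(l := a l + 1) \<in> mingens I"
          unfolding polymatroidal_def vars_def by blast
        have l1: "l \<in> {1..n}" using l by (simp add: vars_def)
        have "\<exists>j'\<in>{1..k l}. u (l,j') < w (l,j')"
        proof (rule ccontr)
          assume "\<not> ?thesis"
          then have "\<forall>j'\<in>{1..k l}. w (l,j') \<le> u (l,j')" by (auto simp: not_less)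
          then have "(\<Sum>j\<in>{1..k l}. w (l,j)) \<le> (\<Sum>j\<in>{1..k l}. u (l,j))" by (intro sum_mono) auto
          then show False using blk[OF u l1] blk[OF w l1] l by simp
        qed
        then obtain j' where j': "j' \<in> {1..k l}" "u (l,j') < w (l,j')" by blast
        have q: "(l,j') \<in> exp_vars n k" using l1 j' unfolding exp_vars_def by auto
        have li: "l \<noteq> i" using l abi by auto
        have "(u((i,j) := u (i,j) - 1))((l,j') := u (l,j') + 1) \<in> prodP_gens n k ((a(i := a i - 1))(l := a l + 1))"
          using swap[OF u p[unfolded pij] q, of "(a(i := a i - 1))(l := a l + 1)"] gt pij li abi by auto
        then show ?thesis using q j' c pij by blast
      qed
    qed
  next
    assume PE: "polymatroidal (exp_vars n k) (expansion n k I)"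
    define emb where "emb a = (\<lambda>(i::nat,j::nat). if j = 1 \<and> i \<in> {1..n} then a i else (0::nat))" for a :: "nat \<Rightarrow> nat"
    have embP: "emb a \<in> prodP_gens n k a" for a
    proof -
      have "emb a \<in> monomials (exp_vars n k)"
        using assms(1) unfolding monomials_def emb_def exp_vars_def by auto
      moreover have "(\<Sum>j\<in>{1..k i}. emb a (i,j)) = a i" if "i \<in> {1..n}" for i
      proof -
        have "(\<Sum>j\<in>{1..k i}. emb a (i,j)) = (\<Sum>j\<in>{1..k i}. if j = 1 then a i else 0)"
          using that unfolding emb_def by (intro sum.cong) auto
        also have "\<dots> = a i" using assms(1) that by simp
        finally show ?thesis .
      qed
      ultimately show ?thesis unfolding prodP_gens_def by auto
    qed
    have embG: "emb a \<in> mingens (expansion n k I)" if "a \<in> mingens I" for a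
      using that embP ME by auto
    show "polymatroidal (vars n) I"
      unfolding polymatroidal_def
    proof (intro conjI ballI impI)
      fix a b assume a: "a \<in> mingens I" and b: "b \<in> mingens I"
      show "mdeg (vars n) a = mdeg (vars n) b"
        using PE embG[OF a] embG[OF b] mdeg_P[OF embP] unfolding polymatroidal_def by metis
    next
      fix a b i assume a: "a \<in> mingens I" and b: "b \<in> mingens I" and i: "i \<in> vars n" and gt: "b i < a i"
      have i1: "i \<in> {1..n}" using i by (simp add: vars_def)
      have p: "(i,1) \<in> exp_vars n k" using i1 assms(1) unfolding exp_vars_def by auto
      have "emb b (i,1) < emb a (i,1)" using gt i1 unfolding emb_def by auto
      with PE embG[OF a] embG[OF b] p obtain q where q: "q \<in> exp_vars n k" "emb a q < emb b q"
        and upd: "((emb a)((i,1) := emb a (i,1) - 1))(q := emb a q + 1) \<in> mingens (expansion n k I)"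
        unfolding polymatroidal_def by blast
      obtain l j' where qlj: "q = (l,j')" by (cases q)
      have j'1: "j' = 1" and l1: "l \<in> {1..n}" and alb: "a l < b l"
        using q(2) qlj unfolding emb_def by (auto split: if_splits)
      have li: "l \<noteq> i" using alb gt by auto
      from upd ME obtain c where c: "c \<in> mingens I"
        and uc: "((emb a)((i,1) := emb a (i,1) - 1))(q := emb a q + 1) \<in> prodP_gens n k c" by auto
      have q1: "(l,1) \<in> exp_vars n k" using q qlj j'1 by simp
      have uc': "((emb a)((i,1) := emb a (i,1) - 1))((l,1) := emb a (l,1) + 1) \<in> prodP_gens n k ((a(i := a i - 1))(l := a l + 1))"
      proof (rule swap[OF embP[of a] p q1])
        show "0 < emb a (i, 1)" using gt i1 unfolding emb_def by auto
        show "(i, 1) \<noteq> (l, 1)" using li by simp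
        show "\<forall>x. ((a(i := a i - 1))(l := a l + 1)) x + (if x = i then 1 else 0) = a x + (if x = l then 1 else 0)"
          using li gt by auto
      qed
      have "(a(i := a i - 1))(l := a l + 1) \<in> monomials (vars n)"
        using Gmon[OF a] i1 l1 unfolding monomials_def vars_def by auto
      then have "c = (a(i := a i - 1))(l := a l + 1)"
        using P_unique[OF uc] uc' qlj j'1 Gmon[OF c] by auto
      then show "\<exists>j\<in>vars n. a j < b j \<and> (a(i := a i - 1))(j := a j + 1) \<in> mingens I"
        using c l1 alb by (auto simp: vars_def)
    qed
  qed
qed

end
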